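(* Let $r\ge 3$ and $n\ge\frac{(r-1)(2r+1)}{2}$, and let $\mathcal{H}$ be an $n$-vertex $r$-graph with $\delta_{r-1}^{+}(\mathcal{H})>\frac{2n}{2r+1}$. Let $V_1,\ldots,V_r\subseteq V(\mathcal{H})$ be pairwise disjoint sets, each independent in $\mathcal{H}$, with $|V_i|>\frac{2n}{2r+1}$ for all $i\in[r]$, and let $Z=V(\mathcal{H})\setminus(V_1\cup\cdots\cup V_r)$. Let $v\in Z$ and let $v_1\in V_1\cap N_{\mathcal{H}}(v)$. Then there exists an edge $e\in\mathcal{H}$ with $\{v,v_1\}\subseteq e$ and $|e\cap(V_2\cup\cdots\cup V_r)|\ge r-2$.
   Context: An $r$-graph $\mathcal{H}$ is a collection of $r$-subsets (edges) of a finite vertex set $V(\mathcal{H})$. The shadow is $\partial\mathcal{H}=\{e\in\binom{V(\mathcal{H})}{r-1}\colon e\subseteq E \text{ for some } E\in\mathcal{H}\}$. For $e\in\partial\mathcal{H}$, $N_{\mathcal{H}}(e)=\{u\in V(\mathcal{H})\colon e\cup\{u\}\in\mathcal{H}\}$. For a vertex $v$, $N_{\mathcal{H}}(v)=\{u\in V(\mathcal{H})\setminus\{v\}\colon \{u,v\}\subseteq E\text{ for some } E\in\mathcal{H}\}$. The minimum positive codegree is $\delta_{r-1}^{+}(\mathcal{H})=\min\{|N_{\mathcal{H}}(e)|\colon e\in\partial\mathcal{H}\}$. A set $I\subseteq V(\mathcal{H})$ is independent in $\mathcal{H}$ if every edge contains at most one vertex of $I$. *)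

theory Defs
  imports Main "HOL-Library.Extended_Nat"
begin

definition r_graph :: "'a set \<Rightarrow> 'a set set \<Rightarrow> nat \<Rightarrow> bool" where
  "r_graph V H r \<longleftrightarrow> finite V \<and> (\<forall>E\<in>H. E \<subseteq> V \<and> card E = r)"

definition shadow :: "'a set \<Rightarrow> 'a set set \<Rightarrow> nat \<Rightarrow> 'a set set" where
  "shadow V H r = {e. e \<subseteq> V \<and> card e = r - 1 \<and> (\<exists>E\<in>H. e \<subseteq> E)}"

definition nbhd_set :: "'a set \<Rightarrow> 'a set set \<Rightarrow> 'a set \<Rightarrow> 'a set" where
  "nbhd_set V H e = {u\<in>V. e \<union> {u} \<in> H}"

definition nbhd_vertex :: "'a set \<Rightarrow> 'a set set \<Rightarrow> 'a \<Rightarrow> 'a set" where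
  "nbhd_vertex V H v = {u\<in>V - {v}. \<exists>E\<in>H. {u, v} \<subseteq> E}"

text \<open>Minimum positive codegree (as an extended natural; infinity if the shadow is empty).\<close>
definition min_pos_codegree :: "'a set \<Rightarrow> 'a set set \<Rightarrow> nat \<Rightarrow> enat" where
  "min_pos_codegree V H r = (INF e\<in>shadow V H r. enat (card (nbhd_set V H e)))"

definition independent :: "'a set set \<Rightarrow> 'a set \<Rightarrow> bool" where
  "independent H I \<longleftrightarrow> (\<forall>E\<in>H. card (E \<inter> I) \<le> 1)"

end

theory Submission
  imports Defs
begin

theorem claim2p6:
  fixes V :: "'a set" and H :: "'a set set" and r n :: nat
    and Vs :: "nat \<Rightarrow> 'a set" and v v1 :: 'a
  assumes "r \<ge> 3"
    and "r_graph V H r"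
    and "n = card V"
    and "2 * n \<ge> (r - 1) * (2 * r + 1)"
    and "enat (2 * n) < enat (2 * r + 1) * min_pos_codegree V H r"
    and "\<forall>i\<in>{1..r}. Vs i \<subseteq> V \<and> independent H (Vs i) \<and> (2 * n) < (2 * r + 1) * card (Vs i)"
    and "\<forall>i\<in>{1..r}. \<forall>j\<in>{1..r}. i \<noteq> j \<longrightarrow> Vs i \<inter> Vs j = {}"
    and "v \<in> V - (\<Union>i\<in>{1..r}. Vs i)"
    and "v1 \<in> Vs 1 \<inter> nbhd_vertex V H v"
  shows "\<exists>e\<in>H. {v, v1} \<subseteq> e \<and> card (e \<inter> (\<Union>i\<in>{2..r}. Vs i)) \<ge> r - 2"
proof (rule ccontr)
  assume neg: "\<not> ?thesis"
  define U where "U = (\<Union>i\<in>{2..r}. Vs i)"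
  define S where "S = {e\<in>H. {v, v1} \<subseteq> e}"
  have finV: "finite V" and Hsub: "\<And>E. E \<in> H \<Longrightarrow> E \<subseteq> V \<and> card E = r"
    using assms(2) unfolding r_graph_def by auto
  have finH: "finite H"
  proof -
    have "H \<subseteq> Pow V" using Hsub by auto
    thus ?thesis using finV finite_subset by blast
  qed
  have r1: "1 \<in> {1..r}" using assms(1) by auto
  have v1V1: "v1 \<in> Vs 1" using assms(9) by auto
  have vnot: "\<And>i. i \<in> {1..r} \<Longrightarrow> v \<notin> Vs i" using assms(8) by auto
  have v1U: "v1 \<notin> U"
  proof
    assume "v1 \<in> U"
    then obtain i where "i \<in> {2..r}" "v1 \<in> Vs i" unfolding U_def by auto
    thus False using assms(7) r1 v1V1 by (metis IntI atLeastAtMost_iff empty_iff le_trans one_le_numeral not_one_le_zero numeral_le_one_iff semiring_norm(69) less_irrefl_nat Suc_1 Suc_leD)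
  qed
  have vU: "v \<notin> U" using vnot unfolding U_def by auto
  obtain E0 where E0: "E0 \<in> H" "{v1, v} \<subseteq> E0" using assms(9) unfolding nbhd_vertex_def by auto
  have Sne: "S \<noteq> {}" using E0 unfolding S_def by auto
  have finS: "finite S" using finH unfolding S_def by auto
  define m where "m = Max ((\<lambda>e. card (e \<inter> U)) ` S)"
  have "m \<in> (\<lambda>e. card (e \<inter> U)) ` S" unfolding m_def using finS Sne by auto
  then obtain e where eS: "e \<in> S" and em: "card (e \<inter> U) = m" by auto
  have mmax: "\<And>e'. e' \<in> S \<Longrightarrow> card (e' \<inter> U) \<le> m" unfolding m_def using finS by auto
  have eH: "e \<in> H" and vve: "{v, v1} \<subseteq> e" using eS unfolding S_def by auto
  have eV: "e \<subseteq> V" and ce: "card e = r" using Hsub[OF eH] by auto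
  have fine: "finite e" using eV finV finite_subset by blast
  have small: "card (e \<inter> U) < r - 2" using neg eH vve unfolding U_def by auto
  have "\<exists>w. w \<in> e - {v, v1} - U"
  proof (rule ccontr)
    assume "\<nexists>w. w \<in> e - {v, v1} - U"
    hence "e - {v, v1} \<subseteq> e \<inter> U" by auto
    hence "card (e - {v, v1}) \<le> card (e \<inter> U)" using fine by (intro card_mono) auto
    moreover have "card (e - {v, v1}) = r - 2"
    proof -
      have "v \<noteq> v1" using vnot[OF r1] v1V1 by auto
      hence "card {v, v1} = 2" by auto
      thus ?thesis using ce vve fine by (simp add: card_Diff_subset)
    qed
    ultimately show False using small by auto
  qed
  then obtain w where w: "w \<in> e" "w \<noteq> v" "w \<noteq> v1" "w \<notin> U" by auto
  have indep: "\<And>i. i \<in> {1..r} \<Longrightarrow> independent H (Vs i)" using assms(6) by auto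
  have twoin: "\<And>i E x y. i \<in> {1..r} \<Longrightarrow> E \<in> H \<Longrightarrow> x \<in> E \<Longrightarrow> y \<in> E \<Longrightarrow> x \<in> Vs i \<Longrightarrow> y \<in> Vs i \<Longrightarrow> x = y"
  proof (rule ccontr)
    fix i E x y assume a: "i \<in> {1..r}" "E \<in> H" "x \<in> E" "y \<in> E" "x \<in> Vs i" "y \<in> Vs i" "x \<noteq> y"
    have "finite E" using Hsub[OF a(2)] finV finite_subset by blast
    hence "card {x, y} \<le> card (E \<inter> Vs i)" using a by (intro card_mono) auto
    moreover have "card (E \<inter> Vs i) \<le> 1" using indep[OF a(1)] a(2) unfolding independent_def by auto
    ultimately show False using a(7) by auto
  qed
  have wV1: "w \<notin> Vs 1" using twoin[OF r1 eH w(1) _ _ v1V1] vve w(3) by auto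
  have wVi: "\<And>i. i \<in> {1..r} \<Longrightarrow> w \<notin> Vs i"
  proof -
    fix i assume i: "i \<in> {1..r}"
    show "w \<notin> Vs i"
    proof (cases "i = 1")
      case True thus ?thesis using wV1 by simp
    next
      case False hence "i \<in> {2..r}" using i by auto
      thus ?thesis using w(4) unfolding U_def by auto
    qed
  qed
  define f where "f = e - {w}"
  have cf: "card f = r - 1" unfolding f_def using w(1) ce fine by simp
  have fsh: "f \<in> shadow V H r" unfolding shadow_def f_def using eV eH cf f_def by auto
  define N where "N = nbhd_set V H f"
  have "min_pos_codegree V H r \<le> enat (card N)"
    unfolding min_pos_codegree_def N_def by (rule INF_lower[OF fsh])
  hence "enat (2 * r + 1) * min_pos_codegree V H r \<le> enat (2 * r + 1) * enat (card N)"
    by (rule mult_left_mono) simp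
  hence Nbig: "2 * n < (2 * r + 1) * card N" using assms(5) by (metis order_less_le_trans times_enat_simps(1) enat_ord_simps(2))
  have NVi: "\<And>i. i \<in> {1..r} \<Longrightarrow> N \<inter> Vs i = {}"
  proof (rule ccontr)
    fix i assume i: "i \<in> {1..r}" and ne: "N \<inter> Vs i \<noteq> {}"
    then obtain u where u: "u \<in> N" "u \<in> Vs i" by auto
    have uV: "u \<in> V" and fuH: "f \<union> {u} \<in> H" using u(1) unfolding N_def nbhd_set_def by auto
    have finf: "finite f" using fine unfolding f_def by auto
    have uf: "u \<notin> f"
    proof
      assume "u \<in> f" hence "f \<union> {u} = f" by auto
      hence "card (f \<union> {u}) = r - 1" using cf by simp
      thus False using Hsub[OF fuH] assms(1) by (metis diff_less less_irrefl_nat zero_less_one le_trans one_le_numeral not_one_le_zero order_less_le_trans le_numeral_extra(1) less_le_trans numeral_le_one_iff zero_less_iff_neq_zero)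
    qed
    have uw: "u \<noteq> w" using wVi[OF i] u(2) by auto
    show False
    proof (cases "e \<inter> Vs i = {}")
      case False
      then obtain x where x: "x \<in> e" "x \<in> Vs i" by auto
      have "x \<noteq> w" using wVi[OF i] x(2) by auto
      hence "x \<in> f" using x unfolding f_def by auto
      hence "x = u" using twoin[OF i fuH _ _ x(2) u(2)] by auto
      thus False using uf \<open>x \<in> f\<close> by simp
    next
      case True
      hence "i \<noteq> 1" using vve v1V1 by auto
      hence "i \<in> {2..r}" using i by auto
      hence uU: "u \<in> U" using u(2) unfolding U_def by auto
      have "f \<union> {u} \<in> S" using fuH vve w unfolding S_def f_def by auto
      hence le: "card ((f \<union> {u}) \<inter> U) \<le> m" by (rule mmax)
      have "(f \<union> {u}) \<inter> U = insert u (e \<inter> U)" using uU w(4) unfolding f_def by auto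
      moreover have "u \<notin> e \<inter> U" using uf uw unfolding f_def by auto
      ultimately have "card ((f \<union> {u}) \<inter> U) = m + 1" using em fine by simp
      thus False using le by simp
    qed
  qed
  have finN: "finite N" unfolding N_def nbhd_set_def using finV by auto
  have fam: "\<And>i. i \<in> {1..r} \<Longrightarrow> finite (Vs i)" using assms(6) finV finite_subset by blast
  have cU: "card (\<Union>i\<in>{1..r}. Vs i) = (\<Sum>i\<in>{1..r}. card (Vs i))"
    by (rule card_UN_disjoint) (use fam assms(7) in auto)
  have "card (N \<union> (\<Union>i\<in>{1..r}. Vs i)) = card N + card (\<Union>i\<in>{1..r}. Vs i)"
    by (rule card_Un_disjoint) (use finN fam NVi in blast)+
  moreover have "card (N \<union> (\<Union>i\<in>{1..r}. Vs i)) \<le> card V"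
    using finV assms(6) unfolding N_def nbhd_set_def by (intro card_mono) auto
  ultimately have tot: "card N + (\<Sum>i\<in>{1..r}. card (Vs i)) \<le> n" using cU assms(3) by simp
  have "(\<Sum>i\<in>{1..r}. 2 * n) \<le> (\<Sum>i\<in>{1..r}. (2 * r + 1) * card (Vs i))"
    using assms(6) by (intro sum_mono) (auto intro: less_imp_le)
  hence s: "r * (2 * n) \<le> (2 * r + 1) * (\<Sum>i\<in>{1..r}. card (Vs i))" by (simp add: sum_distrib_left)
  have "(2 * r + 1) * (card N + (\<Sum>i\<in>{1..r}. card (Vs i))) \<le> (2 * r + 1) * n"
    using tot by (rule mult_left_mono) simp
  hence "(2 * r + 1) * card N + (2 * r + 1) * (\<Sum>i\<in>{1..r}. card (Vs i)) \<le> (2 * r + 1) * n"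
    by (simp add: add_mult_distrib2)
  hence "2 * n + r * (2 * n) < (2 * r + 1) * n" using s Nbig by linarith
  thus False by (simp add: algebra_simps)
qed

end
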